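(* Let $R_1\subset J_1(E)$ be a linear first order system on a vector bundle $E$ of fiber dimension $m$ over an $n$-dimensional base, with coefficients in a differential field $K$, which is involutive and has no zero order equations. Assume the system is written in $\delta$-regular coordinates and solved as in the definition of involution, and that the number $\beta=\beta^n_1$ of equations of class $n$ satisfies $\beta<m$, these equations being solved with respect to $y^1_n,\dots,y^\beta_n$. Then there is a change of unknowns of the form $\bar y^k=y^k-\sum_{l=\beta+1}^m a^k_l(x)\,y^l$ for $1\le k\le\beta$ and $\bar y^l=y^l$ for $\beta<l\le m$ (with $a^k_l\in K$) such that, in the new unknowns: (i) the equations of class $n$ contain $y^{\beta+1},\dots,y^m$ only through $y^l$ and $y^l_i$ with $1\le i\le n-1$ (no jet $y^l_n$, $l>\beta$, appears); (ii) the equations of class $1,\dots,n-1$ contain neither $y^{\beta+1},\dots,y^m$ nor any of their jets.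
   Context: $y^k_i$ denotes the formal first derivative $d_iy^k$. A first order equation solved in a coordinate system is of class $i$ if its leading (principal) jet is of the form $y^k_i$ and it contains no jet $y^l_j$ with $j>i$. Procedure defining classes: solve the maximum number $\beta^n_1$ of equations with respect to jets of class $n$, then the maximum number of remaining equations with respect to jets of class $n-1$, and so on; for an equation of class $i$ the variables $x^1,\dots,x^i$ are multiplicative and $x^{i+1},\dots,x^n$ non-multiplicative. The system is involutive if it is formally integrable and its first prolongation is obtained by prolonging each equation only with respect to its multiplicative variables (coordinates in which this procedure is carried out are called $\delta$-regular). "No zero order equations" means the induced projection $R_1\to E$ is onto. *)

theory Defs
  imports Main
begin

text \<open>
  Unknowns are indexed by k in {1..m},
  base coordinates by i in {1..n}.  A jet coordinate y^k_mu is indexed by a pair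
  (k, mu) with mu :: nat => nat a multi-index (supported in {1..n}).
  A linear differential expression (homogeneous, with coefficients in the
  differential field 'k) is a coefficient function on jet coordinates.
\<close>

type_synonym 'k lexpr = "nat \<times> (nat \<Rightarrow> nat) \<Rightarrow> 'k"

definition zero_mi :: "nat \<Rightarrow> nat" where
  "zero_mi = (\<lambda>_. 0)"

definition unit_mi :: "nat \<Rightarrow> nat \<Rightarrow> nat" where
  "unit_mi i = (\<lambda>j. if j = i then 1 else 0)"

definition mi_deg :: "nat \<Rightarrow> (nat \<Rightarrow> nat) \<Rightarrow> nat" where
  "mi_deg n \<nu> = (\<Sum>j\<in>{1..n}. \<nu> j)"

definition diff_field :: "nat \<Rightarrow> (nat \<Rightarrow> 'k::field \<Rightarrow> 'k) \<Rightarrow> bool" where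
  "diff_field n \<delta> \<longleftrightarrow>
     (\<forall>i\<in>{1..n}. \<forall>x y. \<delta> i (x + y) = \<delta> i x + \<delta> i y \<and> \<delta> i (x * y) = \<delta> i x * y + x * \<delta> i y)
   \<and> (\<forall>i\<in>{1..n}. \<forall>j\<in>{1..n}. \<forall>x. \<delta> i (\<delta> j x) = \<delta> j (\<delta> i x))"

text \<open>Formal derivative d_i of a linear expression:
  d_i (a y^k_mu) = (delta_i a) y^k_mu + a y^k_{mu + 1_i}.\<close>
definition fderiv :: "(nat \<Rightarrow> 'k::field \<Rightarrow> 'k) \<Rightarrow> nat \<Rightarrow> 'k lexpr \<Rightarrow> 'k lexpr" where
  "fderiv \<delta> i P = (\<lambda>(k, \<mu>). \<delta> i (P (k, \<mu>)) + (if 0 < \<mu> i then P (k, \<mu>(i := \<mu> i - 1)) else 0))"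

primrec dmul :: "(nat \<Rightarrow> 'k::field \<Rightarrow> 'k) \<Rightarrow> nat \<Rightarrow> (nat \<Rightarrow> nat) \<Rightarrow> 'k lexpr \<Rightarrow> 'k lexpr" where
  "dmul \<delta> 0 \<nu> P = P"
| "dmul \<delta> (Suc j) \<nu> P = (fderiv \<delta> (Suc j) ^^ \<nu> (Suc j)) (dmul \<delta> j \<nu> P)"

definition kspan :: "'k::field lexpr set \<Rightarrow> 'k lexpr set" where
  "kspan S = {P. \<exists>F c. finite F \<and> F \<subseteq> S \<and> P = (\<lambda>x. \<Sum>s\<in>F. c s * s x)}"

definition ord_le :: "nat \<Rightarrow> nat \<Rightarrow> 'k::zero lexpr \<Rightarrow> bool" where
  "ord_le n q P \<longleftrightarrow> (\<forall>k \<mu>. P (k, \<mu>) \<noteq> 0 \<longrightarrow> mi_deg n \<mu> \<le> q)"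

text \<open>Equations of the r-th prolongation rho_r(R_1) = R_{1+r}.\<close>
definition prol :: "(nat \<Rightarrow> 'k::field \<Rightarrow> 'k) \<Rightarrow> nat \<Rightarrow> ('e \<Rightarrow> 'k lexpr) \<Rightarrow> 'e set \<Rightarrow> nat \<Rightarrow> 'k lexpr set" where
  "prol \<delta> n \<Phi> T r = kspan {dmul \<delta> n \<nu> (\<Phi> \<tau>) | \<tau> \<nu>.
       \<tau> \<in> T \<and> (\<forall>j. j \<notin> {1..n} \<longrightarrow> \<nu> j = 0) \<and> mi_deg n \<nu> \<le> r}"

text \<open>Formal integrability: R_{1+r+1} -> R_{1+r} onto for every r, i.e. (dually)
  every equation of order <= 1+r in the (r+1)-th prolongation already lies in the r-th.\<close>
definition formally_integrable :: "(nat \<Rightarrow> 'k::field \<Rightarrow> 'k) \<Rightarrow> nat \<Rightarrow> ('e \<Rightarrow> 'k lexpr) \<Rightarrow> 'e set \<Rightarrow> bool" where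
  "formally_integrable \<delta> n \<Phi> T \<longleftrightarrow>
     (\<forall>r. \<forall>P\<in>prol \<delta> n \<Phi> T (Suc r). ord_le n (Suc r) P \<longrightarrow> P \<in> prol \<delta> n \<Phi> T r)"

text \<open>No zero order equations: R_1 -> E onto.\<close>
definition no_zero_order :: "nat \<Rightarrow> ('e \<Rightarrow> 'k::field lexpr) \<Rightarrow> 'e set \<Rightarrow> bool" where
  "no_zero_order n \<Phi> T \<longleftrightarrow> (\<forall>P\<in>kspan (\<Phi> ` T). ord_le n 0 P \<longrightarrow> P = (\<lambda>_. 0))"

definition solved_first_order ::
  "nat \<Rightarrow> nat \<Rightarrow> ('e \<Rightarrow> 'k::field lexpr) \<Rightarrow> 'e set \<Rightarrow> ('e \<Rightarrow> nat) \<Rightarrow> ('e \<Rightarrow> nat) \<Rightarrow> bool" where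
  "solved_first_order n m \<Phi> T cls ld \<longleftrightarrow>
     (\<forall>\<tau>\<in>T. \<forall>k \<mu>. \<Phi> \<tau> (k, \<mu>) \<noteq> 0 \<longrightarrow> k \<in> {1..m} \<and> (\<mu> = zero_mi \<or> (\<exists>i\<in>{1..n}. \<mu> = unit_mi i)))
   \<and> (\<forall>\<tau>\<in>T. cls \<tau> \<in> {1..n} \<and> ld \<tau> \<in> {1..m})
   \<and> (\<forall>\<tau>\<in>T. \<Phi> \<tau> (ld \<tau>, unit_mi (cls \<tau>)) = 1)
   \<and> (\<forall>\<tau>\<in>T. \<forall>k j. cls \<tau> < j \<longrightarrow> \<Phi> \<tau> (k, unit_mi j) = 0)
   \<and> (\<forall>\<tau>\<in>T. \<forall>\<tau>'\<in>T. \<tau> \<noteq> \<tau>' \<longrightarrow> cls \<tau> = cls \<tau>' \<longrightarrow>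
        ld \<tau> \<noteq> ld \<tau>' \<and> \<Phi> \<tau> (ld \<tau>', unit_mi (cls \<tau>)) = 0)"

text \<open>Involutive (in the given, delta-regular, solved coordinates): formally integrable and
  the first prolongation is generated by the equations and their multiplicative
  prolongations d_i Phi^tau, 1 <= i <= class of tau.\<close>
definition involutive ::
  "(nat \<Rightarrow> 'k::field \<Rightarrow> 'k) \<Rightarrow> nat \<Rightarrow> ('e \<Rightarrow> 'k lexpr) \<Rightarrow> 'e set \<Rightarrow> ('e \<Rightarrow> nat) \<Rightarrow> bool" where
  "involutive \<delta> n \<Phi> T cls \<longleftrightarrow>
     formally_integrable \<delta> n \<Phi> T
   \<and> prol \<delta> n \<Phi> T 1 = kspan (\<Phi> ` T \<union> {fderiv \<delta> i (\<Phi> \<tau>) | \<tau> i. \<tau> \<in> T \<and> 1 \<le> i \<and> i \<le> cls \<tau>})"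

text \<open>Rewriting a first order linear expression in the new unknowns
  ybar^k = y^k - sum_{l>beta} a k l y^l (k <= beta), ybar^l = y^l (l > beta), i.e. substituting
  y^k = ybar^k + sum_l a k l ybar^l and
  y^k_i = ybar^k_i + sum_l (a k l ybar^l_i + (delta_i (a k l)) ybar^l).
  The result is the coefficient function in the jets of the new unknowns.\<close>
definition change_unknowns ::
  "(nat \<Rightarrow> 'k::field \<Rightarrow> 'k) \<Rightarrow> nat \<Rightarrow> nat \<Rightarrow> nat \<Rightarrow> (nat \<Rightarrow> nat \<Rightarrow> 'k) \<Rightarrow> 'k lexpr \<Rightarrow> 'k lexpr" where
  "change_unknowns \<delta> n m \<beta> a P = (\<lambda>(l, \<mu>).
     P (l, \<mu>) + (if \<beta> < l \<and> l \<le> m then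
        (\<Sum>k\<in>{1..\<beta>}. P (k, \<mu>) * a k l
            + (if \<mu> = zero_mi then (\<Sum>i\<in>{1..n}. P (k, unit_mi i) * \<delta> i (a k l)) else 0))
      else 0))"

end

theory Submission
  imports Defs
begin


definition en2 :: "nat \<Rightarrow> nat \<Rightarrow> nat \<Rightarrow> nat" where
  "en2 n j = (\<lambda>x. unit_mi j x + unit_mi n x)"

lemma fderiv_app: "fderiv \<delta> i P (k, \<mu>) = \<delta> i (P (k, \<mu>)) + (if 0 < \<mu> i then P (k, \<mu>(i := \<mu> i - 1)) else 0)"
  by (simp add: fderiv_def)

lemma unit_ne_zero: "unit_mi i \<noteq> zero_mi"
  by (auto simp: unit_mi_def zero_mi_def fun_eq_iff)

lemma unit_inj: "unit_mi i = unit_mi j \<longleftrightarrow> i = j"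
  by (auto simp: unit_mi_def fun_eq_iff split: if_splits)

lemma en2_ne_zero: "en2 n j \<noteq> zero_mi"
  by (auto simp: en2_def unit_mi_def zero_mi_def fun_eq_iff)

lemma en2_ne_unit: "en2 n j \<noteq> unit_mi i"
proof
  assume h: "en2 n j = unit_mi i"
  hence "en2 n j n = unit_mi i n" by simp
  hence "i = n" by (auto simp: en2_def unit_mi_def split: if_splits)
  show False
  proof (cases "j = n")
    case True
    with h \<open>i = n\<close> have "en2 n j n = unit_mi i n" by simp
    with True \<open>i = n\<close> show False by (simp add: en2_def unit_mi_def)
  next
    case False
    from h have "en2 n j j = unit_mi i j" by simp
    with False \<open>i = n\<close> show False by (simp add: en2_def unit_mi_def)
  qed
qed

lemma en2_pos: "0 < en2 n j i \<longleftrightarrow> i = j \<or> i = n"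
  by (auto simp: en2_def unit_mi_def)

lemma en2_dec_n: "(en2 n j)(n := en2 n j n - 1) = unit_mi j"
  by (auto simp: en2_def unit_mi_def fun_eq_iff)

lemma en2_dec_j: "i \<noteq> n \<Longrightarrow> (en2 n i)(i := en2 n i i - 1) = unit_mi n"
  by (auto simp: en2_def unit_mi_def fun_eq_iff)

lemma unit_dec: "(unit_mi n)(n := unit_mi n n - 1) = zero_mi"
  by (auto simp: unit_mi_def zero_mi_def fun_eq_iff)

lemma unit_pos: "0 < unit_mi n i \<longleftrightarrow> i = n"
  by (auto simp: unit_mi_def)

lemma dmul_unit: "dmul \<delta> j (unit_mi i) P = (if 1 \<le> i \<and> i \<le> j then fderiv \<delta> i P else P)"
  by (induction j) (auto simp: unit_mi_def)

definition lin :: "('k::field lexpr \<Rightarrow> 'k) \<Rightarrow> bool" where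
  "lin L \<longleftrightarrow> (\<forall>F c. finite F \<longrightarrow> L (\<lambda>x. \<Sum>s\<in>F. c s * s x) = (\<Sum>s\<in>F. c s * L s))"

lemma lin_eval: "lin (\<lambda>Q. Q p)"
  by (simp add: lin_def)

lemma lin_add: "lin L1 \<Longrightarrow> lin L2 \<Longrightarrow> lin (\<lambda>Q. L1 Q + L2 Q)"
  by (simp add: lin_def sum.distrib distrib_left)

lemma lin_diff: "lin L1 \<Longrightarrow> lin L2 \<Longrightarrow> lin (\<lambda>Q. L1 Q - L2 Q)"
  by (simp add: lin_def sum_subtractf right_diff_distrib)

lemma lin_scale: "lin L \<Longrightarrow> lin (\<lambda>Q. L Q * w)"
  by (simp add: lin_def sum_distrib_right mult.assoc)

lemma lin_sum: fixes L :: "'i \<Rightarrow> 'k::field lexpr \<Rightarrow> 'k" shows "finite I \<Longrightarrow> (\<And>i. i \<in> I \<Longrightarrow> lin (L i)) \<Longrightarrow> lin (\<lambda>Q. \<Sum>i\<in>I. L i Q)"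
  unfolding lin_def
proof (intro allI impI)
  fix F :: "'k lexpr set" and c
  assume I: "finite I" and h: "\<And>i. i \<in> I \<Longrightarrow> \<forall>F c. finite F \<longrightarrow> L i (\<lambda>x. \<Sum>s\<in>F. c s * s x) = (\<Sum>s\<in>F. c s * L i s)"
    and F: "finite F"
  have "(\<Sum>i\<in>I. L i (\<lambda>x. \<Sum>s\<in>F. c s * s x)) = (\<Sum>i\<in>I. \<Sum>s\<in>F. c s * L i s)"
    using h F by simp
  also have "\<dots> = (\<Sum>s\<in>F. \<Sum>i\<in>I. c s * L i s)" by (rule sum.swap)
  also have "\<dots> = (\<Sum>s\<in>F. c s * (\<Sum>i\<in>I. L i s))" by (simp add: sum_distrib_left)
  finally show "(\<Sum>i\<in>I. L i (\<lambda>x. \<Sum>s\<in>F. c s * s x)) = (\<Sum>s\<in>F. c s * (\<Sum>i\<in>I. L i s))" .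
qed

lemma lin_kspan: "lin L \<Longrightarrow> (\<And>s. s \<in> S \<Longrightarrow> L s = 0) \<Longrightarrow> P \<in> kspan S \<Longrightarrow> L P = 0"
  unfolding kspan_def lin_def
  by (auto simp: subset_iff intro!: sum.neutral)




locale setup2 =
  fixes \<delta> :: "nat \<Rightarrow> 'k::field_char_0 \<Rightarrow> 'k"
    and n m \<beta> :: nat
    and T :: "nat set"
    and \<Phi> :: "nat \<Rightarrow> 'k lexpr"
    and cls ld :: "nat \<Rightarrow> nat"
  assumes K: "diff_field n \<delta>"
    and fin: "finite T"
    and solved: "solved_first_order n m \<Phi> T cls ld"
    and inv: "involutive \<delta> n \<Phi> T cls"
    and beta: "card {\<tau>\<in>T. cls \<tau> = n} = \<beta>"
    and lead_n: "ld ` {\<tau>\<in>T. cls \<tau> = n} = {1..\<beta>}"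
begin

definition C where "C = {\<tau>\<in>T. cls \<tau> = n}"

definition a :: "nat \<Rightarrow> nat \<Rightarrow> 'k" where
  "a k l = - \<Phi> (inv_into C ld k) (l, unit_mi n)"

definition G where
  "G = \<Phi> ` T \<union> {fderiv \<delta> i (\<Phi> \<tau>) | \<tau> i. \<tau> \<in> T \<and> 1 \<le> i \<and> i \<le> cls \<tau>}"

lemma supp: "\<tau> \<in> T \<Longrightarrow> \<Phi> \<tau> (k, \<mu>) \<noteq> 0 \<Longrightarrow> k \<in> {1..m} \<and> (\<mu> = zero_mi \<or> (\<exists>i\<in>{1..n}. \<mu> = unit_mi i))"
  using solved unfolding solved_first_order_def by blast

lemma Phi_en2: "\<tau> \<in> T \<Longrightarrow> \<Phi> \<tau> (k, en2 n j) = 0"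
  using supp en2_ne_zero en2_ne_unit by blast

lemma Phi_high: "\<tau> \<in> T \<Longrightarrow> cls \<tau> < j \<Longrightarrow> \<Phi> \<tau> (k, unit_mi j) = 0"
  using solved unfolding solved_first_order_def by blast

lemma cls_range: "\<tau> \<in> T \<Longrightarrow> 1 \<le> cls \<tau> \<and> cls \<tau> \<le> n"
  using solved unfolding solved_first_order_def by auto

lemma d0: "i \<in> {1..n} \<Longrightarrow> \<delta> i 0 = 0"
proof -
  assume i: "i \<in> {1..n}"
  have "\<delta> i (0 + 0) = \<delta> i 0 + \<delta> i 0" using K i unfolding diff_field_def by blast
  thus ?thesis by simp
qed

lemma d1: "i \<in> {1..n} \<Longrightarrow> \<delta> i 1 = 0"
proof -
  assume i: "i \<in> {1..n}"
  have "\<delta> i (1 * 1) = \<delta> i 1 * 1 + 1 * \<delta> i 1" using K i unfolding diff_field_def by blast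
  thus ?thesis by simp
qed

lemma dneg: "i \<in> {1..n} \<Longrightarrow> \<delta> i x + \<delta> i (- x) = 0"
proof -
  assume i: "i \<in> {1..n}"
  have "\<delta> i (x + - x) = \<delta> i x + \<delta> i (- x)" using K i unfolding diff_field_def by blast
  thus ?thesis using d0[OF i] by simp
qed

lemma finC: "finite C" using fin unfolding C_def by simp

lemma injC: "inj_on ld C"
proof -
  have "card (ld ` C) = card C" using beta lead_n unfolding C_def by simp
  thus ?thesis using eq_card_imp_inj_on[OF finC] by blast
qed

lemma ldC: "\<tau> \<in> C \<Longrightarrow> ld \<tau> \<in> {1..\<beta>}"
  using lead_n unfolding C_def by blast

lemma Cn: assumes "\<tau> \<in> C" "k \<in> {1..\<beta>}"
  shows "\<Phi> \<tau> (k, unit_mi n) = (if k = ld \<tau> then 1 else 0)"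
proof -
  obtain \<tau>' where t': "\<tau>' \<in> C" "k = ld \<tau>'" using assms(2) lead_n unfolding C_def by force
  show ?thesis
  proof (cases "\<tau>' = \<tau>")
    case True thus ?thesis using t' assms solved unfolding solved_first_order_def C_def by auto
  next
    case False
    hence "ld \<tau>' \<noteq> ld \<tau>" using injC t' assms(1) by (meson inj_on_eq_iff)
    moreover have "\<Phi> \<tau> (ld \<tau>', unit_mi (cls \<tau>)) = 0"
      using solved False t' assms(1) unfolding solved_first_order_def C_def by auto
    ultimately show ?thesis using t' assms(1) unfolding C_def by auto
  qed
qed

lemma a_ld: "\<tau> \<in> C \<Longrightarrow> a (ld \<tau>) l = - \<Phi> \<tau> (l, unit_mi n)"
  unfolding a_def using injC by simp

lemma sum_C: assumes "\<tau> \<in> C"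
  shows "(\<Sum>k\<in>{1..\<beta>}. \<Phi> \<tau> (k, unit_mi n) * f k) = f (ld \<tau>)"
proof -
  have "(\<Sum>k\<in>{1..\<beta>}. \<Phi> \<tau> (k, unit_mi n) * f k) = (\<Sum>k\<in>{1..\<beta>}. if k = ld \<tau> then f k else 0)"
    by (rule sum.cong) (auto simp: Cn[OF assms])
  also have "\<dots> = f (ld \<tau>)" using ldC[OF assms] by (simp add: sum.delta')
  finally show ?thesis .
qed

lemma cond_i: "\<tau> \<in> C \<Longrightarrow> \<Phi> \<tau> (l, unit_mi n) + (\<Sum>k\<in>{1..\<beta>}. \<Phi> \<tau> (k, unit_mi n) * a k l) = 0"
proof -
  assume h: "\<tau> \<in> C"
  have "(\<Sum>k\<in>{1..\<beta>}. \<Phi> \<tau> (k, unit_mi n) * a k l) = a (ld \<tau>) l" by (rule sum_C[OF h])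
  thus ?thesis using a_ld[OF h] by simp
qed

lemma dn_in: assumes "\<tau> \<in> T" shows "fderiv \<delta> n (\<Phi> \<tau>) \<in> kspan G"
proof -
  have n: "1 \<le> n" using cls_range[OF assms] by simp
  have "mi_deg n (unit_mi n) = 1" using n unfolding mi_deg_def unit_mi_def by simp
  moreover have "\<forall>j. j \<notin> {1..n} \<longrightarrow> unit_mi n j = 0" using n unfolding unit_mi_def by auto
  ultimately have "dmul \<delta> n (unit_mi n) (\<Phi> \<tau>) \<in> {dmul \<delta> n \<nu> (\<Phi> \<tau>) | \<tau> \<nu>.
       \<tau> \<in> T \<and> (\<forall>j. j \<notin> {1..n} \<longrightarrow> \<nu> j = 0) \<and> mi_deg n \<nu> \<le> 1}" using assms by fastforce
  hence "fderiv \<delta> n (\<Phi> \<tau>) \<in> {dmul \<delta> n \<nu> (\<Phi> \<tau>) | \<tau> \<nu>.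
       \<tau> \<in> T \<and> (\<forall>j. j \<notin> {1..n} \<longrightarrow> \<nu> j = 0) \<and> mi_deg n \<nu> \<le> 1}" using n by (simp add: dmul_unit)
  hence "fderiv \<delta> n (\<Phi> \<tau>) \<in> prol \<delta> n \<Phi> T 1"
    unfolding prol_def kspan_def
    by (intro CollectI exI[of _ "{fderiv \<delta> n (\<Phi> \<tau>)}"] exI[of _ "\<lambda>_. 1"]) auto
  thus ?thesis using inv unfolding involutive_def G_def by simp
qed

end



context setup2
begin

lemma corrected:
  assumes L: "lin L"
    and h0: "\<And>\<tau>. \<tau> \<in> T \<Longrightarrow> L (\<Phi> \<tau>) = 0"
    and h1: "\<And>\<tau> i. \<tau> \<in> T \<Longrightarrow> 1 \<le> i \<Longrightarrow> i \<le> cls \<tau> \<Longrightarrow> i \<noteq> n \<Longrightarrow> L (fderiv \<delta> i (\<Phi> \<tau>)) = 0"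
    and \<Psi>: "\<Psi> \<in> T" "cls \<Psi> < n"
  shows "L (fderiv \<delta> n (\<Phi> \<Psi>)) = 0"
proof -
  have n: "n \<in> {1..n}" using cls_range[OF \<Psi>(1)] by simp
  define M where "M \<tau> Q = Q (ld \<tau>, en2 n n)" for \<tau> and Q :: "'k lexpr"
  define L1 where "L1 Q = L Q - (\<Sum>\<tau>\<in>C. L (fderiv \<delta> n (\<Phi> \<tau>)) * M \<tau> Q)" for Q
  have linL1: "lin L1" unfolding L1_def M_def
    by (intro lin_diff L lin_sum finC) (simp add: mult.commute[of "L _"] lin_scale[OF lin_eval, simplified])
  have Mfd: "M \<tau> (fderiv \<delta> i (\<Phi> \<tau>')) = (if i = n then \<Phi> \<tau>' (ld \<tau>, unit_mi n) else 0)"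
    if "\<tau>' \<in> T" "i \<in> {1..n}" for \<tau> \<tau>' i
    unfolding M_def fderiv_app using that Phi_en2 d0 en2_pos en2_dec_n by auto
  have vanish: "L1 s = 0" if s: "s \<in> G" for s
  proof -
    { fix \<tau>' assume t: "\<tau>' \<in> T" "s = \<Phi> \<tau>'"
      have "L1 s = 0" unfolding L1_def M_def using t h0 Phi_en2 by simp }
    moreover
    { fix \<tau>' i assume t: "\<tau>' \<in> T" "s = fderiv \<delta> i (\<Phi> \<tau>')" "1 \<le> i" "i \<le> cls \<tau>'" "i \<noteq> n"
      have i: "i \<in> {1..n}" using t cls_range by force
      have "L1 s = 0" unfolding L1_def using t h1 Mfd[OF t(1) i] by simp }
    moreover
    { fix \<tau>' assume t: "\<tau>' \<in> T" "s = fderiv \<delta> n (\<Phi> \<tau>')" "n \<le> cls \<tau>'"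
      have tC: "\<tau>' \<in> C" using t cls_range unfolding C_def by force
      have "(\<Sum>\<tau>\<in>C. L (fderiv \<delta> n (\<Phi> \<tau>)) * M \<tau> s) = (\<Sum>\<tau>\<in>C. if \<tau> = \<tau>' then L (fderiv \<delta> n (\<Phi> \<tau>)) else 0)"
      proof (rule sum.cong)
        fix \<tau> assume tau: "\<tau> \<in> C"
        have "M \<tau> s = \<Phi> \<tau>' (ld \<tau>, unit_mi n)" using Mfd[OF t(1) n] t by simp
        also have "\<dots> = (if \<tau> = \<tau>' then 1 else 0)"
          using Cn[OF tC ldC[OF tau]] injC tau tC by (auto dest: inj_onD)
        finally show "L (fderiv \<delta> n (\<Phi> \<tau>)) * M \<tau> s = (if \<tau> = \<tau>' then L (fderiv \<delta> n (\<Phi> \<tau>)) else 0)" by simp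
      qed simp
      also have "\<dots> = L s" using tC t finC by (simp add: sum.delta')
      finally have "L1 s = 0" unfolding L1_def by simp }
    ultimately show ?thesis using s unfolding G_def by (cases "\<exists>i \<tau>'. \<tau>' \<in> T \<and> s = fderiv \<delta> i (\<Phi> \<tau>') \<and> 1 \<le> i \<and> i \<le> cls \<tau>' \<and> i = n") blast+
  qed
  have "L1 (fderiv \<delta> n (\<Phi> \<Psi>)) = 0" by (rule lin_kspan[OF linL1 vanish dn_in[OF \<Psi>(1)]])
  moreover have "M \<tau> (fderiv \<delta> n (\<Phi> \<Psi>)) = 0" for \<tau>
    using Mfd[OF \<Psi>(1) n] Phi_high \<Psi> by simp
  ultimately show ?thesis unfolding L1_def by simp
qed

end



context setup2
begin

lemma T1:
  assumes \<Psi>: "\<Psi> \<in> T" "cls \<Psi> < n"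
  shows "\<Phi> \<Psi> (l, unit_mi j) + (\<Sum>k\<in>{1..\<beta>}. \<Phi> \<Psi> (k, unit_mi j) * a k l) = 0"
proof -
  have n: "n \<in> {1..n}" using cls_range[OF \<Psi>(1)] by simp
  define L where "L Q = Q (l, en2 n j) + (\<Sum>k\<in>{1..\<beta>}. Q (k, en2 n j) * a k l)" for Q :: "'k lexpr"
  have linL: "lin L" unfolding L_def
    by (intro lin_add lin_eval lin_sum finite_atLeastAtMost lin_scale)
  have "L (fderiv \<delta> n (\<Phi> \<Psi>)) = 0"
  proof (rule corrected[OF linL _ _ \<Psi>])
    fix \<tau> assume "\<tau> \<in> T" thus "L (\<Phi> \<tau>) = 0" unfolding L_def using Phi_en2 by simp
  next
    fix \<tau> i assume t: "\<tau> \<in> T" "1 \<le> i" "i \<le> cls \<tau>" "i \<noteq> n"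
    have i: "i \<in> {1..n}" using t cls_range by force
    have val: "fderiv \<delta> i (\<Phi> \<tau>) (k, en2 n j) = (if i = j then \<Phi> \<tau> (k, unit_mi n) else 0)" for k
      unfolding fderiv_app using Phi_en2[OF t(1)] d0[OF i] en2_pos en2_dec_j t(4) by auto
    show "L (fderiv \<delta> i (\<Phi> \<tau>)) = 0"
    proof (cases "i = j")
      case True
      show ?thesis
      proof (cases "cls \<tau> = n")
        case True
        hence "\<tau> \<in> C" using t unfolding C_def by simp
        thus ?thesis unfolding L_def val using \<open>i = j\<close> cond_i by simp
      next
        case False
        hence "cls \<tau> < n" using cls_range t by force
        thus ?thesis unfolding L_def val using Phi_high[OF t(1)] by simp
      qed
    next
      case False thus ?thesis unfolding L_def val by simp
    qed
  qed
  moreover have "fderiv \<delta> n (\<Phi> \<Psi>) (k, en2 n j) = \<Phi> \<Psi> (k, unit_mi j)" for k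
    unfolding fderiv_app using Phi_en2[OF \<Psi>(1)] d0[OF n] en2_pos en2_dec_n by simp
  ultimately show ?thesis unfolding L_def by simp
qed

lemma T0:
  assumes \<Psi>: "\<Psi> \<in> T" "cls \<Psi> < n"
  shows "\<Phi> \<Psi> (l, zero_mi) + (\<Sum>k\<in>{1..\<beta>}. \<Phi> \<Psi> (k, zero_mi) * a k l
            + (\<Sum>i\<in>{1..n}. \<Phi> \<Psi> (k, unit_mi i) * \<delta> i (a k l))) = 0"
proof -
  have n: "n \<in> {1..n}" using cls_range[OF \<Psi>(1)] by simp
  define L where "L Q = Q (l, unit_mi n) + (\<Sum>k\<in>{1..\<beta>}. Q (k, unit_mi n) * a k l
            + (\<Sum>j\<in>{1..n}. Q (k, en2 n j) * \<delta> j (a k l)))" for Q :: "'k lexpr"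
  have linL: "lin L" unfolding L_def
    by (intro lin_add lin_eval lin_sum finite_atLeastAtMost lin_scale)
  have "L (fderiv \<delta> n (\<Phi> \<Psi>)) = 0"
  proof (rule corrected[OF linL _ _ \<Psi>])
    fix \<tau> assume t: "\<tau> \<in> T"
    show "L (\<Phi> \<tau>) = 0"
    proof (cases "cls \<tau> = n")
      case True
      hence "\<tau> \<in> C" using t unfolding C_def by simp
      thus ?thesis unfolding L_def using Phi_en2[OF t] cond_i by simp
    next
      case False
      hence "cls \<tau> < n" using cls_range t by force
      thus ?thesis unfolding L_def using Phi_en2[OF t] Phi_high[OF t] by simp
    qed
  next
    fix \<tau> i assume t: "\<tau> \<in> T" "1 \<le> i" "i \<le> cls \<tau>" "i \<noteq> n"
    have i: "i \<in> {1..n}" using t cls_range by force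
    have val: "fderiv \<delta> i (\<Phi> \<tau>) (k, en2 n j) = (if j = i then \<Phi> \<tau> (k, unit_mi n) else 0)" for k j
      unfolding fderiv_app using Phi_en2[OF t(1)] d0[OF i] en2_pos en2_dec_j t(4) by auto
    have val2: "fderiv \<delta> i (\<Phi> \<tau>) (k, unit_mi n) = \<delta> i (\<Phi> \<tau> (k, unit_mi n))" for k
      unfolding fderiv_app using unit_pos t(4) by simp
    have inner: "(\<Sum>j\<in>{1..n}. fderiv \<delta> i (\<Phi> \<tau>) (k, en2 n j) * \<delta> j (a k l))
        = \<Phi> \<tau> (k, unit_mi n) * \<delta> i (a k l)" for k
    proof -
      have "(\<Sum>j\<in>{1..n}. fderiv \<delta> i (\<Phi> \<tau>) (k, en2 n j) * \<delta> j (a k l))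
          = (\<Sum>j\<in>{1..n}. if j = i then \<Phi> \<tau> (k, unit_mi n) * \<delta> j (a k l) else 0)"
        by (rule sum.cong) (simp_all add: val)
      also have "\<dots> = \<Phi> \<tau> (k, unit_mi n) * \<delta> i (a k l)" using i by (simp add: sum.delta')
      finally show ?thesis .
    qed
    show "L (fderiv \<delta> i (\<Phi> \<tau>)) = 0"
    proof (cases "cls \<tau> = n")
      case True
      hence tC: "\<tau> \<in> C" using t unfolding C_def by simp
      have z: "\<delta> i (\<Phi> \<tau> (k, unit_mi n)) = 0" if "k \<in> {1..\<beta>}" for k
        using Cn[OF tC that] d0[OF i] d1[OF i] by simp
      have "L (fderiv \<delta> i (\<Phi> \<tau>)) = \<delta> i (\<Phi> \<tau> (l, unit_mi n))
          + (\<Sum>k\<in>{1..\<beta>}. \<Phi> \<tau> (k, unit_mi n) * \<delta> i (a k l))"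
        unfolding L_def val2 inner by (simp add: z sum.distrib)
      also have "\<dots> = \<delta> i (\<Phi> \<tau> (l, unit_mi n)) + \<delta> i (a (ld \<tau>) l)"
        using sum_C[OF tC] by simp
      also have "\<dots> = 0" using a_ld[OF tC] dneg[OF i] by simp
      finally show ?thesis .
    next
      case False
      hence "cls \<tau> < n" using cls_range t by force
      hence "\<Phi> \<tau> (k, unit_mi n) = 0" for k using Phi_high[OF t(1)] by simp
      thus ?thesis unfolding L_def val2 inner using d0[OF i] by simp
    qed
  qed
  moreover have "fderiv \<delta> n (\<Phi> \<Psi>) (k, en2 n j) = \<Phi> \<Psi> (k, unit_mi j)" for k j
    unfolding fderiv_app using Phi_en2[OF \<Psi>(1)] d0[OF n] en2_pos en2_dec_n by simp
  moreover have "fderiv \<delta> n (\<Phi> \<Psi>) (k, unit_mi n) = \<Phi> \<Psi> (k, zero_mi)" for k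
    unfolding fderiv_app using Phi_high[OF \<Psi>] d0[OF n] unit_pos unit_dec by simp
  ultimately show ?thesis unfolding L_def by simp
qed

end



theorem theorem2p10:
  fixes \<delta> :: "nat \<Rightarrow> 'k::field_char_0 \<Rightarrow> 'k"
    and n m \<beta> :: nat
    and T :: "nat set"
    and \<Phi> :: "nat \<Rightarrow> 'k lexpr"
    and cls ld :: "nat \<Rightarrow> nat"
  assumes K: "diff_field n \<delta>"
    and fin: "finite T"
    and solved: "solved_first_order n m \<Phi> T cls ld"
    and inv: "involutive \<delta> n \<Phi> T cls"
    and nz: "no_zero_order n \<Phi> T"
    and beta: "card {\<tau>\<in>T. cls \<tau> = n} = \<beta>"
    and lead_n: "ld ` {\<tau>\<in>T. cls \<tau> = n} = {1..\<beta>}"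
    and beta_lt: "\<beta> < m"
  shows "\<exists>a :: nat \<Rightarrow> nat \<Rightarrow> 'k.
           (\<forall>\<tau>\<in>T. cls \<tau> = n \<longrightarrow>
              (\<forall>l. \<beta> < l \<and> l \<le> m \<longrightarrow> change_unknowns \<delta> n m \<beta> a (\<Phi> \<tau>) (l, unit_mi n) = 0))
         \<and> (\<forall>\<tau>\<in>T. cls \<tau> < n \<longrightarrow>
              (\<forall>l \<mu>. \<beta> < l \<and> l \<le> m \<longrightarrow> change_unknowns \<delta> n m \<beta> a (\<Phi> \<tau>) (l, \<mu>) = 0))"
proof -
  interpret S: setup2 \<delta> n m \<beta> T \<Phi> cls ld
    using K fin solved inv beta lead_n by unfold_locales
  show ?thesis
  proof (intro exI[of _ S.a] conjI ballI impI allI)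
    fix \<tau> l assume t: "\<tau> \<in> T" "cls \<tau> = n" and l: "\<beta> < l \<and> l \<le> m"
    have "\<tau> \<in> S.C" using t unfolding S.C_def by simp
    thus "change_unknowns \<delta> n m \<beta> S.a (\<Phi> \<tau>) (l, unit_mi n) = 0"
      unfolding change_unknowns_def using l S.cond_i unit_ne_zero by simp
  next
    fix \<tau> l \<mu> assume t: "\<tau> \<in> T" "cls \<tau> < n" and l: "\<beta> < l \<and> l \<le> m"
    show "change_unknowns \<delta> n m \<beta> S.a (\<Phi> \<tau>) (l, \<mu>) = 0"
    proof (cases "\<mu> = zero_mi")
      case True thus ?thesis unfolding change_unknowns_def using l S.T0[OF t] by simp
    next
      case False
      show ?thesis
      proof (cases "\<exists>j. \<mu> = unit_mi j")
        case True
        then obtain j where j: "\<mu> = unit_mi j" by blast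
        thus ?thesis unfolding change_unknowns_def using l S.T1[OF t] False by simp
      next
        case nu: False
        hence "\<Phi> \<tau> (k, \<mu>) = 0" for k using S.supp[OF t(1)] False by blast
        thus ?thesis unfolding change_unknowns_def using False by simp
      qed
    qed
  qed
qed


end
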